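(* Let $R_n(x)=\sum_{k=0}^nR_{n,k}x^k$ for $n\ge1$. Then for every $n\ge1$, $R_n(x)$ has only real zeros, all lying in $[-1,0)$, and $R_n(x)$ separates $R_{n+1}(x)$. More precisely, $x=-1$ is a zero of $R_n(x)$ of multiplicity $\lfloor n/2\rfloor+1$, and $R_n(x)$ has $\lceil n/2\rceil-1$ further zeros, which are simple.
   Context: Let $D$ be the derivation of $\mathbb{Q}[y,z]$ with $D(y)=z^2$, $D(z)=yz$ (corresponding to $d/dx$ with $y=\tan x$, $z=\sec x$). The integers $R_{n,k}$ are defined for $n\ge1$ by $D^n(y+z)=\sum_{k=0}^nR_{n,k}y^{n-k}z^{k+1}$ in $\mathbb{Q}[y,z]$. Equivalently, $R_1(x)=1+x$ and $R_{n+1}(x)=(1+nx^2)R_n(x)+x(1-x^2)R_n'(x)$ for $n\ge1$. For real polynomials $f,F$ with only real zeros, with zeros $r_1\ge r_2\ge\cdots$ of $f$ and $s_1\ge s_2\ge\cdots$ of $F$ (listed with multiplicity), $f$ separates $F$ means $\deg f\le\deg F\le\deg f+1$ and $s_1\ge r_1\ge s_2\ge r_2\ge s_3\ge r_3\ge\cdots$. *)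

theory Defs
  imports "HOL-Computational_Algebra.Polynomial"
begin

text \<open>The polynomials R_n(x), n \<ge> 1, via the recurrence
  R_1(x) = 1 + x,  R_{n+1}(x) = (1 + n x^2) R_n(x) + x (1 - x^2) R_n'(x).
  The value at index 0 is an unused dummy.\<close>
fun R :: "nat \<Rightarrow> real poly" where
  "R 0 = 0"
| "R (Suc 0) = [:1, 1:]"
| "R (Suc (Suc n)) =
     [:1, 0, real (Suc n):] * R (Suc n) + [:0, 1, 0, -1:] * pderiv (R (Suc n))"

definition only_real_zeros :: "real poly \<Rightarrow> bool" where
  "only_real_zeros f \<longleftrightarrow> f \<noteq> 0 \<and>
     (\<forall>z::complex. poly (map_poly of_real f) z = 0 \<longrightarrow> z \<in> \<real>)"

definition zero_list :: "real poly \<Rightarrow> real list \<Rightarrow> bool" where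
  "zero_list f rs \<longleftrightarrow> f \<noteq> 0 \<and> sorted_wrt (\<ge>) rs \<and>
     f = smult (lead_coeff f) (prod_list (map (\<lambda>r. [:-r, 1:]) rs))"

definition separates :: "real poly \<Rightarrow> real poly \<Rightarrow> bool" where
  "separates f F \<longleftrightarrow> (\<exists>rs ss. zero_list f rs \<and> zero_list F ss \<and>
     degree f \<le> degree F \<and> degree F \<le> degree f + 1 \<and>
     (\<forall>i < length rs. rs ! i \<le> ss ! i) \<and>
     (\<forall>i. i < length rs \<and> Suc i < length ss \<longrightarrow> ss ! Suc i \<le> rs ! i))"

end

theory Submission
  imports Defs
begin

lemma coeffA: "coeff ([:1,0,N:]*p) (Suc (Suc k)) = coeff p (Suc(Suc k)) + N * coeff (p::real poly) k"
  by (simp add: mult_pCons_left)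
lemma coeffB: "coeff ([:0,1,0,-1:]*p) (Suc (Suc (Suc k))) = coeff p (Suc (Suc k)) - coeff (p::real poly) k"
  by (simp add: mult_pCons_left)

lemma degree_R: "degree (R n) \<le> n"
proof (induction n rule: R.induct)
  case 1 then show ?case by simp
next
  case 2 then show ?case by simp
next
  case (3 n)
  let ?p = "R (Suc n)"
  show ?case
  proof (rule degree_le, intro allI impI)
    fix K assume K: "Suc (Suc n) < K"
    then obtain k where Kk: "K = Suc (Suc (Suc k))" and kn: "n \<le> k"
      using K by (cases K; simp; rename_tac K'; case_tac K'; simp; rename_tac K''; case_tac K''; auto)
    have z: "coeff ?p (Suc (Suc (Suc k))) = 0" "coeff ?p (Suc (Suc k)) = 0"
      using 3 kn by (auto intro!: coeff_eq_0)
    have "coeff (R (Suc (Suc n))) K = coeff ?p (Suc (Suc (Suc k))) + real (Suc n) * coeff ?p (Suc k)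
        + (coeff (pderiv ?p) (Suc (Suc k)) - coeff (pderiv ?p) k)"
      by (simp only: Kk R.simps coeff_add coeffA coeffB)
    also have "\<dots> = real (Suc n) * coeff ?p (Suc k) - real (Suc k) * coeff ?p (Suc k)"
      using z by (simp add: coeff_pderiv)
    also have "\<dots> = 0"
    proof (cases "k = n")
      case True then show ?thesis by simp
    next
      case False
      then have "coeff ?p (Suc k) = 0" using 3 kn by (auto intro!: coeff_eq_0)
      then show ?thesis by simp
    qed
    finally show "coeff (R (Suc (Suc n))) K = 0" .
  qed
qed

definition prodL :: "real list \<Rightarrow> real poly" where
  "prodL ts = prod_list (map (\<lambda>t. [:-t,1:]) ts)"

lemma prodL_simps[simp]: "prodL [] = 1" "prodL (t#ts) = [:-t,1:] * prodL ts"
  "prodL (xs @ ys) = prodL xs * prodL ys"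
  by (simp_all add: prodL_def)

lemma poly_prodL: "poly (prodL ts) y = (\<Prod>t\<leftarrow>ts. y - t)"
  by (induction ts) (auto simp: algebra_simps)

lemma sign_above: "(\<forall>t\<in>set ts. y < t) \<Longrightarrow> (-1)^length ts * poly (prodL ts) y > 0"
proof (induction ts)
  case Nil then show ?case by simp
next
  case (Cons a ts)
  then have "(-1)^length ts * poly (prodL ts) y > 0" "y - a < 0" by auto
  then have "(-1)^length ts * poly (prodL ts) y * (-(y - a)) > 0" by simp
  then show ?case by (simp add: algebra_simps)
qed

lemma sign_below: "(\<forall>t\<in>set ts. t < y) \<Longrightarrow> poly (prodL ts) y > 0"
  by (induction ts) auto

lemma lead_prodL[simp]: "lead_coeff (prodL ts) = 1"
  by (induction ts) (simp_all only: prodL_simps lead_coeff_mult, simp_all)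

lemma prodL_nz[simp]: "prodL ts \<noteq> 0"
  using lead_prodL[of ts] by (metis leading_coeff_0_iff zero_neq_one)

lemma degree_prodL[simp]: "degree (prodL ts) = length ts"
proof (induction ts)
  case (Cons a ts)
  have "degree ([:-a,1:] * prodL ts) = degree [:-a,1:] + degree (prodL ts)"
    by (rule degree_mult_eq) auto
  then show ?case using Cons by simp
qed simp

lemma root_list:
  fixes Q :: "real poly"
  assumes "Q \<noteq> 0" "distinct us" "\<forall>u\<in>set us. poly Q u = 0" "degree Q \<le> length us"
  shows "Q = smult (lead_coeff Q) (prodL us)"
  using assms
proof (induction us arbitrary: Q)
  case Nil
  then have "degree Q = 0" by simp
  then obtain a where "Q = [:a:]" using degree0_coeffs by blast
  then show ?case by simp
next
  case (Cons u us)
  then have "[:-u,1:] dvd Q" by (simp add: poly_eq_0_iff_dvd)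
  then obtain Q' where Q: "Q = [:-u,1:] * Q'" by (elim dvdE)
  with Cons.prems have nz: "Q' \<noteq> 0" by auto
  have "\<forall>v\<in>set us. poly Q' v = 0" using Cons.prems Q by auto
  moreover have "degree Q = Suc (degree Q')" unfolding Q by (subst degree_mult_eq) (use nz in auto)
  then have "degree Q' \<le> length us" using Cons.prems by simp
  ultimately have "Q' = smult (lead_coeff Q') (prodL us)" using Cons nz by auto
  moreover have "lead_coeff Q = lead_coeff Q'" by (simp only: Q lead_coeff_mult) simp
  ultimately show ?case using Q by (metis mult_smult_right prodL_simps(2))
qed

lemma ivt_list:
  fixes Q :: "real poly"
  assumes "sorted_wrt (>) E" "\<forall>k<length E. (-1)^k * poly Q (E!k) > 0"
  shows "\<exists>us. length us = length E - 1 \<and>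
     (\<forall>k<length us. E!(Suc k) < us!k \<and> us!k < E!k \<and> poly Q (us!k) = 0)"
proof -
  have "\<forall>k<length E - 1. \<exists>x. E!(Suc k) < x \<and> x < E!k \<and> poly Q x = 0"
  proof (intro allI impI)
    fix k assume k: "k < length E - 1"
    have lt: "E!(Suc k) < E!k" using assms(1) k by (simp add: sorted_wrt_iff_nth_less)
    have k1: "Suc k < length E" "k < length E" using k by auto
    have a: "(-1)^k * poly Q (E!k) > 0" "(-1)^Suc k * poly Q (E!Suc k) > 0"
      using assms(2) k1 by blast+
    have "poly Q (E!Suc k) * poly Q (E!k) < 0"
      using a by (cases "even k") (auto intro: mult_pos_neg mult_neg_pos)
    then show "\<exists>x. E!(Suc k) < x \<and> x < E!k \<and> poly Q x = 0" using poly_IVT[OF lt] by blast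
  qed
  then obtain f where f: "\<forall>k<length E - 1. E!(Suc k) < f k \<and> f k < E!k \<and> poly Q (f k) = 0"
    by metis
  show ?thesis
    by (rule exI[of _ "map f [0..<length E - 1]"]) (use f in auto)
qed

lemma R_step:
  assumes "R (Suc k) = [:1,1:]^Suc j * P"
  shows "R (Suc (Suc k)) = [:1,1:]^Suc j * ([:1,0,real (Suc k):]*P + smult (real (Suc j)) ([:0,1,-1:]*P)
            + [:0,1,0,-1:]*pderiv P)"
proof -
  define A where "A = [:1,1::real:]"
  define C where "C = [:1,0,real (Suc k):]"
  define X where "X = [:0,1,-1::real:]"
  have D: "[:0,1,0,-1:] = X * A" by (simp add: X_def A_def)
  have dA: "pderiv A = 1" by (simp add: A_def pderiv_pCons)
  have sm: "\<And>c p. smult c p = [:c:] * p" by simp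
  have "R (Suc (Suc k)) = C * (A^Suc j * P) + (X * A) * pderiv (A^Suc j * P)"
    using assms by (simp only: R.simps C_def A_def D)
  also have "pderiv (A^Suc j * P) = smult (real (Suc j)) (A^j) * P + A^Suc j * pderiv P"
    by (simp only: pderiv_mult pderiv_power_Suc dA) (simp add: algebra_simps)
  finally show ?thesis unfolding A_def[symmetric] C_def[symmetric] X_def[symmetric] D
    by (simp only: sm) (simp add: algebra_simps)
qed

lemma sorted_gt_distinct: "sorted_wrt (>) (xs::real list) \<Longrightarrow> distinct xs"
  by (induction xs) auto

definition Inv :: "nat \<Rightarrow> real list \<Rightarrow> real \<Rightarrow> bool" where
  "Inv n ts c \<longleftrightarrow> c > 0 \<and> sorted_wrt (>) ts \<and> (\<forall>t\<in>set ts. -1 < t \<and> t < 0)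
     \<and> length ts = n - (n div 2 + 1) \<and> R n = smult c ([:1,1:]^(n div 2 + 1) * prodL ts)"

definition Good :: "nat \<Rightarrow> real list \<Rightarrow> real list \<Rightarrow> real \<Rightarrow> bool" where
  "Good n ts us c' \<longleftrightarrow> Inv (Suc n) us c' \<and> length ts \<le> length us \<and> length us \<le> Suc (length ts)
     \<and> (\<forall>i<length ts. ts!i < us!i) \<and> (\<forall>i. i < length ts \<and> Suc i < length us \<longrightarrow> us!(Suc i) < ts!i)"

lemma finish:
  fixes Q :: "real poly"
  assumes RQ: "R (Suc n) = [:1,1:]^(Suc n div 2 + 1) * Q"
    and sE: "sorted_wrt (>) E" and E0: "E!0 = 0" and Ene: "E \<noteq> []"
    and Eb: "\<forall>e\<in>set E. -1 \<le> e \<and> e \<le> 0"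
    and sg: "\<forall>k<length E. (-1)^k * poly Q (E!k) > 0"
    and lenE: "length E - 1 = Suc n - (Suc n div 2 + 1)"
    and Ets: "\<forall>i<length ts. E!(Suc i) = ts!i" "length ts < length E" "length E \<le> length ts + 2"
  shows "\<exists>us c'. Good n ts us c'"
proof -
  obtain us where lus: "length us = length E - 1"
    and us: "\<forall>k<length us. E!(Suc k) < us!k \<and> us!k < E!k \<and> poly Q (us!k) = 0"
    using ivt_list[OF sE sg] by blast
  have Enth: "\<And>k. k < length E \<Longrightarrow> -1 \<le> E!k \<and> E!k \<le> 0" using Eb nth_mem by blast
  have ub: "\<forall>u\<in>set us. -1 < u \<and> u < 0"
  proof
    fix u assume "u \<in> set us"
    then obtain k where "k < length us" "u = us!k" by (auto simp: in_set_conv_nth)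
    then show "-1 < u \<and> u < 0" using us Enth[of k] Enth[of "Suc k"] lus by fastforce
  qed
  have sus: "sorted_wrt (>) us"
    unfolding sorted_wrt_iff_nth_Suc_transp[OF transp_on_greater]
  proof (intro allI impI)
    fix i assume "Suc i < length us"
    then show "us!i > us!(Suc i)" using us[rule_format, of i] us[rule_format, of "Suc i"] by auto
  qed
  have Q0: "poly Q 0 > 0" using sg[rule_format, of 0] E0 Ene by simp
  then have Qnz: "Q \<noteq> 0" by auto
  have Anz: "[:1,1::real:]^(Suc n div 2 + 1) \<noteq> 0" by (rule power_not_zero) simp
  have "degree (R (Suc n)) = (Suc n div 2 + 1) + degree Q"
    unfolding RQ by (subst degree_mult_eq[OF Anz Qnz]) (simp only: degree_linear_power)
  with degree_R[of "Suc n"] have dQ: "degree Q \<le> length us" using lus lenE by simp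
  have Qf: "Q = smult (lead_coeff Q) (prodL us)"
    by (rule root_list[OF Qnz sorted_gt_distinct[OF sus] _ dQ]) (use us in \<open>auto simp: in_set_conv_nth\<close>)
  have "poly (prodL us) 0 > 0" by (rule sign_below) (use ub in auto)
  moreover have "poly Q 0 = lead_coeff Q * poly (prodL us) 0" by (subst Qf) simp
  ultimately have c': "lead_coeff Q > 0" using Q0 by (simp add: zero_less_mult_iff)
  have "Inv (Suc n) us (lead_coeff Q)"
    unfolding Inv_def using c' sus ub lus lenE RQ Qf
    by (metis mult_smult_right)
  moreover have "\<forall>i<length ts. ts!i < us!i"
  proof (intro allI impI)
    fix i assume i: "i < length ts"
    then have "i < length us" using lus Ets by simp
    then show "ts!i < us!i" using us[rule_format, of i] Ets(1)[rule_format, OF i] by simp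
  qed
  moreover have "\<forall>i. i < length ts \<and> Suc i < length us \<longrightarrow> us!(Suc i) < ts!i" using Ets us lus by auto
  ultimately have "Good n ts us (lead_coeff Q)" unfolding Good_def using lus Ets by auto
  then show ?thesis by blast
qed

lemma Inv_step:
  assumes n: "n \<ge> 1" and I: "Inv n ts c"
  shows "\<exists>us c'. Good n ts us c'"
proof -
  obtain k where k: "n = Suc k" using n by (cases n) auto
  define m where "m = n div 2 + 1"
  define j where "j = n div 2"
  have mj: "m = Suc j" by (simp add: m_def j_def)
  define P where "P = smult c (prodL ts)"
  define A where "A = [:1,1::real:]"
  have c: "c > 0" and sts: "sorted_wrt (>) ts" and tb: "\<forall>t\<in>set ts. -1 < t \<and> t < 0"
    and lts: "length ts = n - m" using I by (auto simp: Inv_def m_def)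
  have Rn: "R (Suc k) = [:1,1:]^Suc j * P"
    using I k unfolding Inv_def P_def j_def by (simp add: mult_smult_right)
  define B where "B = [:1,0,real n:]*P + smult (real m) ([:0,1,-1:]*P) + [:0,1,0,-1:]*pderiv P"
  have RB: "R (Suc n) = A^m * B"
    using R_step[OF Rn] unfolding k B_def A_def mj by simp
  have polyB: "\<And>y. poly B y = (1 + real n * y^2) * poly P y + real m * (y - y^2) * poly P y
      + (y - y^3) * poly (pderiv P) y"
    by (simp add: B_def algebra_simps power2_eq_square power3_eq_cube)
  have P0: "poly P 0 > 0"
  proof -
    have "poly (prodL ts) 0 > 0" by (rule sign_below) (use tb in auto)
    then show ?thesis using c by (simp add: P_def)
  qed
  have B0: "poly B 0 > 0" using P0 polyB[of 0] by simp
  have Pm1: "(-1)^length ts * poly P (-1) > 0"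
  proof -
    have "(-1)^length ts * poly (prodL ts) (-1) > 0" by (rule sign_above) (use tb in auto)
    then have "c * ((-1)^length ts * poly (prodL ts) (-1)) > 0" using c by simp
    then show ?thesis by (simp add: P_def mult.left_commute)
  qed
  have Bt: "\<forall>i<length ts. (-1)^(Suc i) * poly B (ts!i) > 0"
  proof (intro allI impI)
    fix i assume i: "i < length ts"
    define t where "t = ts!i"
    define xs where "xs = take i ts"
    define ys where "ys = drop (Suc i) ts"
    have tsd: "ts = xs @ t # ys" using id_take_nth_drop[OF i] unfolding xs_def ys_def t_def .
    have lxs: "length xs = i" using i by (simp add: xs_def)
    have sxs: "\<forall>x\<in>set xs. t < x" and sys: "\<forall>y\<in>set ys. y < t"
      using sts unfolding tsd by (auto simp: sorted_wrt_append)
    have tt: "-1 < t" "t < 0" using tb i by (auto simp: t_def)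
    define S where "S = smult c (prodL xs * prodL ys)"
    have PS: "P = [:-t,1:] * S" unfolding P_def S_def tsd by (simp add: algebra_simps)
    have Pt: "poly P t = 0" unfolding PS by simp
    have dPt: "poly (pderiv P) t = poly S t" unfolding PS pderiv_mult by (simp add: pderiv_pCons)
    have "(-1)^i * poly S t = c * ((-1)^length xs * poly (prodL xs) t) * poly (prodL ys) t"
      by (simp add: S_def lxs algebra_simps)
    moreover have "(-1)^length xs * poly (prodL xs) t > 0" by (rule sign_above) (use sxs in auto)
    moreover have "poly (prodL ys) t > 0" by (rule sign_below) (use sys in auto)
    ultimately have Sp: "(-1)^i * poly S t > 0" using c by simp
    have neg: "t - t^3 < 0"
    proof -
      have "t - t^3 = t * (1 - t^2)" by (simp add: algebra_simps power2_eq_square power3_eq_cube)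
      moreover have "1 - t^2 > 0" using tt by (simp add: abs_square_less_1)
      ultimately show ?thesis using tt by (simp add: mult_neg_pos)
    qed
    have "(-1)^(Suc i) * poly B t = (-(t - t^3)) * ((-1)^i * poly S t)"
    proof -
      have e: "poly B t = (t - t^3) * poly S t" using polyB[of t] Pt dPt by simp
      show ?thesis by (subst e) (simp add: algebra_simps)
    qed
    also have "\<dots> > 0" using neg Sp by simp
    finally show "(-1)^(Suc i) * poly B (ts!i) > 0" by (simp add: t_def)
  qed
  show ?thesis
  proof (cases "even n")
    case True
    define E where "E = 0 # ts @ [-1]"
    have mm: "Suc n div 2 + 1 = m" using True by (simp add: m_def)
    have "poly B (-1) = (1 + real n - 2 * real m) * poly P (-1)" using polyB[of "-1"]
      by (simp add: algebra_simps power2_eq_square power3_eq_cube)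
    also have "1 + real n - 2 * real m = -1" using True by (auto simp: m_def elim!: evenE)
    finally have Bm1: "poly B (-1) = - poly P (-1)" by simp
    show ?thesis
    proof (rule finish[of n B E ts])
      show "R (Suc n) = [:1,1:]^(Suc n div 2 + 1) * B" using RB mm by (simp add: A_def)
      show "sorted_wrt (>) E" using sts tb by (auto simp: E_def sorted_wrt_append)
      show "E!0 = 0" "E \<noteq> []" by (simp_all add: E_def)
      show "\<forall>e\<in>set E. -1 \<le> e \<and> e \<le> 0" using tb by (auto simp: E_def)
      show "\<forall>k<length E. (-1)^k * poly B (E!k) > 0"
      proof (intro allI impI)
        fix k assume "k < length E"
        then consider "k = 0" | i where "k = Suc i" "i < length ts" | "k = Suc (length ts)"
          by (cases k) (auto simp: E_def less_Suc_eq)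
        then show "(-1)^k * poly B (E!k) > 0"
        proof cases
          case 1 then show ?thesis using B0 by (simp add: E_def)
        next
          case 2 then show ?thesis using Bt by (simp add: E_def nth_append)
        next
          case 3 then show ?thesis using Pm1 Bm1 by (simp add: E_def)
        qed
      qed
      show "length E - 1 = Suc n - (Suc n div 2 + 1)" using lts mm n True by (auto simp: E_def m_def elim!: evenE)
      show "\<forall>i<length ts. E!(Suc i) = ts!i" "length ts < length E" "length E \<le> length ts + 2"
        by (simp_all add: E_def nth_append)
    qed
  next
    case False
    define E where "E = 0 # ts"
    have mm: "Suc n div 2 + 1 = Suc m" using False by (simp add: m_def)
    have "poly B (-1) = (1 + real n - 2 * real m) * poly P (-1)" using polyB[of "-1"]
      by (simp add: algebra_simps power2_eq_square power3_eq_cube)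
    also have "1 + real n - 2 * real m = 0" using False by (auto simp: m_def elim!: oddE)
    finally have "poly B (-1) = 0" by simp
    then have "[:1,1:] dvd B" using poly_eq_0_iff_dvd[of B "-1"] by simp
    then obtain Q where BQ: "B = [:1,1:] * Q" by (elim dvdE)
    have pBQ: "\<And>y. poly B y = (1 + y) * poly Q y" unfolding BQ by (simp add: algebra_simps)
    show ?thesis
    proof (rule finish[of n Q E ts])
      show "R (Suc n) = [:1,1:]^(Suc n div 2 + 1) * Q" using RB mm BQ by (simp add: A_def algebra_simps)
      show "sorted_wrt (>) E" using sts tb by (auto simp: E_def)
      show "E!0 = 0" "E \<noteq> []" by (simp_all add: E_def)
      show "\<forall>e\<in>set E. -1 \<le> e \<and> e \<le> 0" using tb by (auto simp: E_def)
      show "\<forall>k<length E. (-1)^k * poly Q (E!k) > 0"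
      proof (intro allI impI)
        fix k assume "k < length E"
        then consider "k = 0" | i where "k = Suc i" "i < length ts"
          by (cases k) (auto simp: E_def)
        then show "(-1)^k * poly Q (E!k) > 0"
        proof cases
          case 1 then show ?thesis using B0 pBQ[of 0] by (simp add: E_def)
        next
          case 2
          then have t1: "1 + ts!i > 0" using tb nth_mem by fastforce
          have "(-1)^k * poly B (E!k) > 0" using Bt 2 by (simp add: E_def)
          then have "(1 + ts!i) * ((-1)^k * poly Q (E!k)) > 0" using 2 pBQ[of "ts!i"]
            by (simp add: E_def algebra_simps)
          then show ?thesis using t1 by (simp add: zero_less_mult_iff)
        qed
      qed
      show "length E - 1 = Suc n - (Suc n div 2 + 1)" using lts mm False by (auto simp: E_def m_def elim!: oddE)
      show "\<forall>i<length ts. E!(Suc i) = ts!i" "length ts < length E" "length E \<le> length ts + 2"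
        by (simp_all add: E_def)
    qed
  qed
qed

lemma Inv_ex: "n \<ge> 1 \<Longrightarrow> \<exists>ts c. Inv n ts c"
proof (induction n rule: dec_induct)
  case base
  have "Inv 1 [] 1" by (simp add: Inv_def)
  then show ?case by blast
next
  case (step n)
  then obtain ts c where "Inv n ts c" by blast
  then obtain us c' where "Good n ts us c'" using Inv_step step by blast
  then show ?case unfolding Good_def by blast
qed

lemma coeff_prodL_len: "coeff (prodL xs) (length xs) = 1"
  using lead_prodL[of xs] by simp

lemma prodL_rep: "prodL (replicate m (-1)) = [:1,1:]^m"
  by (induction m) auto

lemma poly_prodL_0: "poly (prodL rs) x = 0 \<longleftrightarrow> x \<in> set rs"
  by (induction rs) auto

lemma map_of_real_mult: "map_poly (of_real::real\<Rightarrow>complex) (p * q) = map_poly of_real p * map_poly of_real q"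
  by (simp add: poly_eq_iff coeff_map_poly coeff_mult)

lemma poly_map_prodL: "poly (map_poly (of_real::real\<Rightarrow>complex) (prodL rs)) z = (\<Prod>t\<leftarrow>rs. z - of_real t)"
proof (induction rs)
  case Nil then show ?case by simp
next
  case (Cons a rs)
  have "map_poly (of_real::real\<Rightarrow>complex) [:-a,1:] = [:- of_real a, 1:]" by (simp add: map_poly_pCons)
  then show ?case using Cons by (simp only: prodL_simps map_of_real_mult poly_mult) (simp add: algebra_simps)
qed

lemma order_prodL: "distinct rs \<Longrightarrow> x \<in> set rs \<Longrightarrow> order x (prodL rs) = 1"
proof (induction rs)
  case Nil then show ?case by simp
next
  case (Cons a rs)
  have "order x (prodL (a#rs)) = order x [:-a,1:] + order x (prodL rs)"
    by (simp only: prodL_simps) (rule order_mult, metis prodL_nz prodL_simps(2))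
  moreover have "order x [:-a,1:] = (if x = a then 1 else 0)"
    using order_power_n_n[of a 1] by (auto intro: order_0I)
  moreover have "x \<noteq> a \<Longrightarrow> order x (prodL rs) = 1" using Cons by auto
  moreover have "x = a \<Longrightarrow> order x (prodL rs) = 0" using Cons by (auto intro: order_0I simp: poly_prodL_0)
  ultimately show ?case by auto
qed

lemma ceil_half: "nat \<lceil>real n / 2\<rceil> = (n + 1) div 2"
proof -
  have "\<lceil>real n / 2\<rceil> = int ((n + 1) div 2)"
  proof (cases "even n")
    case True then obtain q where "n = 2 * q" by (elim evenE)
    then show ?thesis by (intro ceiling_unique) auto
  next
    case False then obtain q where "n = 2 * q + 1" by (elim oddE)
    then show ?thesis by (intro ceiling_unique) auto
  qed
  then show ?thesis by simp
qed

theorem mainTheorem5: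
  fixes n :: nat
  assumes "n \<ge> 1"
  shows "only_real_zeros (R n)
    \<and> (\<forall>x::real. poly (R n) x = 0 \<longrightarrow> -1 \<le> x \<and> x < 0)
    \<and> separates (R n) (R (Suc n))
    \<and> order (-1) (R n) = n div 2 + 1
    \<and> card {x::real. poly (R n) x = 0 \<and> x \<noteq> -1} = nat \<lceil>real n / 2\<rceil> - 1
    \<and> (\<forall>x::real. poly (R n) x = 0 \<and> x \<noteq> -1 \<longrightarrow> order x (R n) = 1)"
proof -
  obtain ts c where I: "Inv n ts c" using Inv_ex assms by blast
  then obtain us c' where G: "Good n ts us c'" using Inv_step assms by blast
  define m where "m = n div 2 + 1"
  define m' where "m' = Suc n div 2 + 1"
  define rs where "rs = ts @ replicate m (-1)"
  define ss where "ss = us @ replicate m' (-1)"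
  have c: "c > 0" and sts: "sorted_wrt (>) ts" and tb: "\<forall>t\<in>set ts. -1 < t \<and> t < 0"
    and lts: "length ts = n - m" and Rn: "R n = smult c ([:1,1:]^m * prodL ts)"
    using I by (auto simp: Inv_def m_def)
  have c': "c' > 0" and sus: "sorted_wrt (>) us" and ub: "\<forall>t\<in>set us. -1 < t \<and> t < 0"
    and lus: "length us = Suc n - m'" and Rn': "R (Suc n) = smult c' ([:1,1:]^m' * prodL us)"
    using G by (auto simp: Good_def Inv_def m'_def)
  have il: "length ts \<le> length us" "length us \<le> Suc (length ts)"
    "\<forall>i<length ts. ts!i < us!i" "\<forall>i. i < length ts \<and> Suc i < length us \<longrightarrow> us!(Suc i) < ts!i"
    using G by (auto simp: Good_def)
  have Rrs: "R n = smult c (prodL rs)" using Rn by (simp add: rs_def prodL_rep mult.commute)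
  have Rss: "R (Suc n) = smult c' (prodL ss)" using Rn' by (simp add: ss_def prodL_rep mult.commute)
  have mn: "m \<le> n" "m' \<le> Suc n" using assms by (auto simp: m_def m'_def)
  have lrs: "length rs = n" using lts mn by (simp add: rs_def)
  have lss: "length ss = Suc n" using lus mn by (simp add: ss_def)
  have Rnz: "R n \<noteq> 0" using Rrs c by simp
  have roots: "\<And>x. poly (R n) x = 0 \<longleftrightarrow> x \<in> set rs"
    using c by (simp add: Rrs poly_prodL_0)
  have setrs: "set rs = set ts \<union> {-1}" using mn assms by (auto simp: rs_def m_def)
  have ORZ: "only_real_zeros (R n)"
    unfolding only_real_zeros_def
  proof (intro conjI allI impI)
    show "R n \<noteq> 0" by (rule Rnz)
    fix z :: complex assume "poly (map_poly of_real (R n)) z = 0"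
    then have "(\<Prod>t\<leftarrow>rs. z - of_real t) = 0" using c
      by (simp add: Rrs map_poly_smult poly_map_prodL)
    then obtain t where "z = of_real t" by (auto simp: prod_list_zero_iff)
    then show "z \<in> \<real>" by simp
  qed
  have BND: "\<forall>x::real. poly (R n) x = 0 \<longrightarrow> -1 \<le> x \<and> x < 0"
    using roots setrs tb by fastforce
  have ORD1: "order (-1) (R n) = n div 2 + 1"
  proof -
    have nz: "[:1,1:]^m * prodL ts \<noteq> 0" by simp
    have "order (-1) (R n) = order (-1) ([:1,1::real:]^m) + order (-1) (prodL ts)"
      using c nz by (simp add: Rn order_smult order_mult)
    moreover have "order (-1) ([:1,1::real:]^m) = m" using order_power_n_n[of "-1::real" m] by simp
    moreover have "order (-1) (prodL ts) = 0" using tb by (intro order_0I) (auto simp: poly_prodL_0)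
    ultimately show ?thesis by (simp add: m_def)
  qed
  have dts: "distinct ts" using sts by (rule sorted_gt_distinct)
  have CARD: "card {x::real. poly (R n) x = 0 \<and> x \<noteq> -1} = nat \<lceil>real n / 2\<rceil> - 1"
  proof -
    have "{x::real. poly (R n) x = 0 \<and> x \<noteq> -1} = set ts" using roots setrs tb by auto
    moreover have "n - (n div 2 + 1) = (n+1) div 2 - 1" by presburger
    ultimately show ?thesis using distinct_card[OF dts] lts ceil_half[of n] by (simp add: m_def)
  qed
  have SIMPLE: "\<forall>x::real. poly (R n) x = 0 \<and> x \<noteq> -1 \<longrightarrow> order x (R n) = 1"
  proof (intro allI impI)
    fix x :: real assume x: "poly (R n) x = 0 \<and> x \<noteq> -1"
    then have xt: "x \<in> set ts" using roots setrs by auto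
    have nz: "[:1,1:]^m * prodL ts \<noteq> 0" by simp
    have "order x (R n) = order x ([:1,1::real:]^m) + order x (prodL ts)"
      using c nz by (simp add: Rn order_smult order_mult)
    moreover have "order x ([:1,1::real:]^m) = 0" using x by (intro order_0I) simp
    ultimately show "order x (R n) = 1" using order_prodL[OF dts xt] by simp
  qed
  have srep: "\<And>k. sorted_wrt (\<ge>) (replicate k (-1::real))" by (induct_tac k) auto
  have srs: "sorted_wrt (\<ge>) rs"
    using sorted_wrt_mono_rel[of ts "(>)" "(\<ge>)"] sts tb by (auto simp: rs_def sorted_wrt_append srep)
  have sss: "sorted_wrt (\<ge>) ss"
    using sorted_wrt_mono_rel[of us "(>)" "(\<ge>)"] sus ub by (auto simp: ss_def sorted_wrt_append srep)
  have zl: "\<And>p c xs. c \<noteq> 0 \<Longrightarrow> sorted_wrt (\<ge>) xs \<Longrightarrow> p = smult c (prodL xs) \<Longrightarrow> zero_list p xs"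
    using coeff_prodL_len by (simp add: zero_list_def lead_coeff_smult prodL_def[symmetric])
  have z1: "zero_list (R n) rs" using zl[OF _ srs Rrs] c by simp
  have z2: "zero_list (R (Suc n)) ss" using zl[OF _ sss Rss] c' by simp
  have dn: "degree (R n) = n" using Rrs c lrs by simp
  have dn': "degree (R (Suc n)) = Suc n" using Rss c' lss by simp
  have ssb: "\<forall>i<length ss. -1 \<le> ss!i" using ub by (auto simp: ss_def nth_append dest!: nth_mem intro: less_imp_le)
  have SEP: "separates (R n) (R (Suc n))"
    unfolding separates_def
  proof (intro exI conjI)
    show "zero_list (R n) rs" "zero_list (R (Suc n)) ss" by (fact z1, fact z2)
    show "degree (R n) \<le> degree (R (Suc n))" "degree (R (Suc n)) \<le> degree (R n) + 1"
      using dn dn' by simp_all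
    show "\<forall>i<length rs. rs!i \<le> ss!i"
    proof (intro allI impI)
      fix i assume i: "i < length rs"
      show "rs!i \<le> ss!i"
      proof (cases "i < length ts")
        case True
        then show ?thesis using il by (auto simp: rs_def ss_def nth_append intro: less_imp_le)
      next
        case False
        then have "rs!i = -1" using i by (simp add: rs_def nth_append)
        then show ?thesis using ssb i lrs lss by simp
      qed
    qed
    show "\<forall>i. i < length rs \<and> Suc i < length ss \<longrightarrow> ss!(Suc i) \<le> rs!i"
    proof (intro allI impI)
      fix i assume i: "i < length rs \<and> Suc i < length ss"
      show "ss!(Suc i) \<le> rs!i"
      proof (cases "i < length ts")
        case True
        then have r: "rs!i = ts!i" by (simp add: rs_def nth_append)
        show ?thesis
        proof (cases "Suc i < length us")
          case True
          then show ?thesis using il \<open>i < length ts\<close> r by (auto simp: ss_def nth_append intro: less_imp_le)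
        next
          case False
          moreover have "Suc i - length us < m'" using i lss by (simp add: ss_def m'_def) linarith
          ultimately have "ss!(Suc i) = -1" by (simp add: ss_def nth_append)
          moreover have "ts!i > -1" using tb \<open>i < length ts\<close> nth_mem by blast
          ultimately show ?thesis using r by simp
        qed
      next
        case False
        have "i - length ts < m" using i lrs False by (simp add: rs_def) linarith
        then have "rs!i = -1" using False by (simp add: rs_def nth_append)
        moreover have "Suc i - length us < m'" "\<not> Suc i < length us" using i lss il False by (simp_all add: ss_def, linarith+)
        moreover have "ss!(Suc i) = -1" using calculation(2,3) by (simp add: ss_def nth_append)
        ultimately show ?thesis by simp
      qed
    qed
  qed
  show ?thesis using ORZ BND SEP ORD1 CARD SIMPLE by blast
qed

end
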